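(* Let $i\in[d]$, $\Delta_i>0$ and $c_4\ge1$ a constant, and suppose the offsets satisfy $\|w_{i,r}\|_2\le\Delta_i$ and $|b_{i,r}|\le\Delta_i$ for all $r\in[m]$. Then for every $x_{1:i}$ with $\|x_{1:i}\|_2\le\frac12$, with probability at least $1-\exp\!\left(-\frac{32(c_4-1)^2m^2\Delta_i^2}{\pi}\right)$ over the random initialization, for at most a $c_4\frac{4\Delta_i\sqrt m}{\sqrt\pi}$ fraction of $r\in[m]$ we have $$\mathbf 1\{\langle\bar w_{i,r}+w_{i,r},\hat x_{1:i}\rangle+\bar b_{i,r}+b_{i,r}\ge0\}\ne\mathbf 1\{\langle\bar w_{i,r},\hat x_{1:i}\rangle+\bar b_{i,r}\ge0\}.$$
   Context: For $\|x_{1:i}\|_2\le1$, $\hat x_{1:i}=(x_1,\dots,x_i,\sqrt{1-\|x_{1:i}\|_2^2})\in\mathbb{R}^{i+1}$. Random initial parameters $\bar w_{i,r}\sim\mathcal N(0,\frac1mI_{i+1})$, $\bar b_{i,r}\sim\mathcal N(0,\frac1m)$, independent over $r\in[m]$; $w_{i,r}\in\mathbb{R}^{i+1}$, $b_{i,r}\in\mathbb{R}$ are (fixed) offsets. *)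

theory Defs
  imports "HOL-Probability.Probability"
begin

(* Vectors in R^k are represented as functions nat => real, using coordinates 0..k-1.
   x_{1:i} = (x 0, ..., x (i-1));  hat x_{1:i} in R^{i+1} has coordinates 0..i. *)

definition xhat :: "nat \<Rightarrow> (nat \<Rightarrow> real) \<Rightarrow> (nat \<Rightarrow> real)" where
  "xhat i x = (\<lambda>j. if j < i then x j
                    else if j = i then sqrt (1 - (\<Sum>k<i. (x k)\<^sup>2)) else 0)"

definition ip :: "nat \<Rightarrow> (nat \<Rightarrow> real) \<Rightarrow> (nat \<Rightarrow> real) \<Rightarrow> real" where
  "ip i u v = (\<Sum>j\<le>i. u j * v j)"

definition gauss_m :: "nat \<Rightarrow> real measure" where
  "gauss_m m = density lborel (normal_density 0 (sqrt (1 / real m)))"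

(* joint law of the random initialisation: independently for each r < m,
   wbar_{i,r} ~ N(0, (1/m) I_{i+1}) (coordinates 0..i) and bbar_{i,r} ~ N(0, 1/m);
   a sample theta gives wbar_{i,r} = fst (theta r), bbar_{i,r} = snd (theta r). *)
definition init_measure :: "nat \<Rightarrow> nat \<Rightarrow> (nat \<Rightarrow> (nat \<Rightarrow> real) \<times> real) measure" where
  "init_measure m i = PiM {..<m} (\<lambda>r. PiM {..i} (\<lambda>j. gauss_m m) \<Otimes>\<^sub>M gauss_m m)"

definition flip_set ::
  "nat \<Rightarrow> nat \<Rightarrow> (nat \<Rightarrow> nat \<Rightarrow> real) \<Rightarrow> (nat \<Rightarrow> real) \<Rightarrow> (nat \<Rightarrow> real)
     \<Rightarrow> (nat \<Rightarrow> (nat \<Rightarrow> real) \<times> real) \<Rightarrow> nat set" where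
  "flip_set m i w b x \<theta> =
     {r \<in> {..<m}.
        (ip i (\<lambda>j. fst (\<theta> r) j + w r j) (xhat i x) + snd (\<theta> r) + b r \<ge> 0)
        \<noteq> (ip i (fst (\<theta> r)) (xhat i x) + snd (\<theta> r) \<ge> 0)}"

end

theory Submission
  imports Defs
begin

lemma gauss_interval:
  assumes "1 \<le> m" "0 \<le> t"
  shows "emeasure (gauss_m m) {v. \<bar>v + a\<bar> \<le> t} \<le> ennreal (2 * t * sqrt (real m) / sqrt (2 * pi))"
proof -
  define c where "c = sqrt (real m) / sqrt (2 * pi)"
  have c0: "c \<ge> 0" unfolding c_def by simp
  have S: "{v. \<bar>v + a\<bar> \<le> t} = {-a-t..-a+t}" by auto
  have bnd: "normal_density 0 (sqrt (1 / real m)) v \<le> c" for v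
  proof -
    have "normal_density 0 (sqrt (1 / real m)) v = 1 / sqrt (2 * pi * (1 / real m)) * exp (-(v)\<^sup>2 / (2 * (1/real m)))"
      using assms by (simp add: normal_density_def)
    also have "\<dots> \<le> 1 / sqrt (2 * pi * (1 / real m)) * 1"
      by (intro mult_left_mono) auto
    also have "1 / sqrt (2 * pi * (1 / real m)) = c"
      using assms by (simp add: c_def real_sqrt_divide real_sqrt_mult field_simps)
    finally show ?thesis by simp
  qed
  have "emeasure (gauss_m m) {-a-t..-a+t} = (\<integral>\<^sup>+v. ennreal (normal_density 0 (sqrt (1 / real m)) v) * indicator {-a-t..-a+t} v \<partial>lborel)"
    unfolding gauss_m_def by (subst emeasure_density) auto
  also have "\<dots> \<le> (\<integral>\<^sup>+v. ennreal c * indicator {-a-t..-a+t} v \<partial>lborel)"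
    by (intro nn_integral_mono mult_right_mono) (auto simp: bnd intro!: ennreal_leI)
  also have "\<dots> = ennreal c * emeasure lborel {-a-t..-a+t}"
    by (simp add: nn_integral_cmult_indicator)
  also have "\<dots> = ennreal (c * (2 * t))"
    using assms c0 by (simp add: ennreal_mult)
  also have "c * (2 * t) = 2 * t * sqrt (real m) / sqrt (2 * pi)"
    unfolding c_def by simp
  finally show ?thesis unfolding S .
qed

lemma xhat_norm:
  assumes "sqrt (\<Sum>j<i. (x j)\<^sup>2) \<le> 1/2"
  shows "(\<Sum>j\<le>i. (xhat i x j)\<^sup>2) = 1"
proof -
  have s: "(\<Sum>j<i. (x j)\<^sup>2) \<le> 1"
  proof -
    have n: "0 \<le> (\<Sum>j<i. (x j)\<^sup>2)" by (simp add: sum_nonneg)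
    have "(\<Sum>j<i. (x j)\<^sup>2) = (sqrt (\<Sum>j<i. (x j)\<^sup>2))\<^sup>2" using n by simp
    also have "\<dots> \<le> (1/2)\<^sup>2" using assms n by (intro power_mono) auto
    also have "(1/2::real)\<^sup>2 \<le> 1" by (simp add: power2_eq_square)
    finally show ?thesis .
  qed
  have "(\<Sum>j\<le>i. (xhat i x j)\<^sup>2) = (\<Sum>j<i. (xhat i x j)\<^sup>2) + (xhat i x i)\<^sup>2"
    by (simp only: lessThan_Suc_atMost[symmetric] sum.lessThan_Suc)
  also have "(\<Sum>j<i. (xhat i x j)\<^sup>2) = (\<Sum>j<i. (x j)\<^sup>2)"
    by (intro sum.cong) (auto simp: xhat_def)
  also have "(xhat i x i)\<^sup>2 = 1 - (\<Sum>j<i. (x j)\<^sup>2)"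
    using s by (simp add: xhat_def)
  finally show ?thesis by simp
qed

lemma ip_bound:
  assumes "sqrt (\<Sum>j<i. (x j)\<^sup>2) \<le> 1/2" "sqrt (\<Sum>j\<le>i. (u j)\<^sup>2) \<le> D"
  shows "\<bar>ip i u (xhat i x)\<bar> \<le> D"
proof -
  have "\<bar>ip i u (xhat i x)\<bar> \<le> (\<Sum>j\<le>i. \<bar>u j\<bar> * \<bar>xhat i x j\<bar>)"
    unfolding ip_def by (rule order_trans[OF sum_abs]) (simp add: abs_mult)
  also have "\<dots> \<le> L2_set u {..i} * L2_set (xhat i x) {..i}"
    by (rule L2_set_mult_ineq)
  also have "L2_set (xhat i x) {..i} = 1"
    using xhat_norm[OF assms(1)] by (simp add: L2_set_def)
  finally show ?thesis using assms(2) by (simp add: L2_set_def)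
qed

theorem lemma2:
  fixes d i m :: nat and \<Delta> c4 :: real
    and w :: "nat \<Rightarrow> nat \<Rightarrow> real" and b :: "nat \<Rightarrow> real" and x :: "nat \<Rightarrow> real"
  assumes "1 \<le> i" and "i \<le> d" and "1 \<le> m"
    and "\<Delta> > 0" and "c4 \<ge> 1"
    and "\<forall>r<m. sqrt (\<Sum>j\<le>i. (w r j)\<^sup>2) \<le> \<Delta>"
    and "\<forall>r<m. \<bar>b r\<bar> \<le> \<Delta>"
    and "sqrt (\<Sum>j<i. (x j)\<^sup>2) \<le> 1/2"
  shows "measure (init_measure m i)
           {\<theta> \<in> space (init_measure m i).
              real (card (flip_set m i w b x \<theta>))
                \<le> c4 * (4 * \<Delta> * sqrt (real m) / sqrt pi) * real m}
         \<ge> 1 - exp (- (32 * (c4 - 1)\<^sup>2 * (real m)\<^sup>2 * \<Delta>\<^sup>2 / pi))"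
proof -
  define G where "G = gauss_m m"
  define N1 where "N1 = PiM {..i} (\<lambda>j. G)"
  define N where "N = N1 \<Otimes>\<^sub>M G"
  define M where "M = init_measure m i"
  define xh where "xh = xhat i x"
  define P where "P = (\<lambda>r (z::(nat\<Rightarrow>real)\<times>real).
     (ip i (\<lambda>j. fst z j + w r j) xh + snd z + b r \<ge> 0) \<noteq> (ip i (fst z) xh + snd z \<ge> 0))"
  define Y where "Y = (\<lambda>r z. if P r z then 1 else (0::real))"
  define X where "X = (\<lambda>r \<theta>. Y r (\<theta> r))"
  define p where "p = 4 * \<Delta> * sqrt (real m) / sqrt pi"
  define p0 where "p0 = 4 * \<Delta> * sqrt (real m) / sqrt (2 * pi)"
  have MN: "M = PiM {..<m} (\<lambda>r. N)"
    unfolding M_def init_measure_def N_def N1_def G_def ..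
  have G_prob: "prob_space G" unfolding G_def gauss_m_def using assms(3) by (intro prob_space_normal_density) simp
  interpret G: prob_space G by (rule G_prob)
  have N1_prob: "prob_space N1" unfolding N1_def by (rule prob_space_PiM) (rule G_prob)
  interpret N1: prob_space N1 by (rule N1_prob)
  have N_prob: "prob_space N" unfolding N_def by (intro prob_space_pair N1_prob G_prob)
  interpret N: prob_space N by (rule N_prob)
  have M_prob: "prob_space M" unfolding MN by (intro prob_space_PiM N_prob)
  interpret M: prob_space M by (rule M_prob)
  have setsG: "sets G = sets borel" unfolding G_def gauss_m_def using assms(3) by simp
  have spaceG: "space G = UNIV" unfolding G_def gauss_m_def using assms(3) by simp
  have fstj: "(\<lambda>z. fst z j) \<in> borel_measurable N" if "j \<le> i" for j
  proof -
    have "(\<lambda>u. u j) \<in> measurable N1 G" unfolding N1_def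
      using that by (intro measurable_component_singleton) auto
    then have "(\<lambda>u. u j) \<in> borel_measurable N1" using measurable_cong_sets[OF refl setsG, of N1] by simp
    then show ?thesis unfolding N_def by (rule measurable_compose[OF measurable_fst])
  qed
  have sndm: "snd \<in> borel_measurable N"
    unfolding N_def using measurable_snd[of N1 G] measurable_cong_sets[OF refl setsG, of "N1 \<Otimes>\<^sub>M G"] by simp
  have ipm: "(\<lambda>z. ip i (\<lambda>j. fst z j + c j) xh) \<in> borel_measurable N" for c
    unfolding ip_def by (intro borel_measurable_sum borel_measurable_times borel_measurable_add borel_measurable_const fstj) auto
  have ipm0: "(\<lambda>z. ip i (fst z) xh) \<in> borel_measurable N"
    unfolding ip_def by (intro borel_measurable_sum borel_measurable_times borel_measurable_const fstj) auto
  have Ym: "Y r \<in> borel_measurable N" for r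
  proof -
    note [measurable] = ipm ipm0 sndm
    show ?thesis unfolding Y_def P_def by measurable
  qed
  have Xm: "X r \<in> borel_measurable M" if "r < m" for r
  proof -
    have "(\<lambda>\<theta>. \<theta> r) \<in> measurable M N" unfolding MN using that
      by (intro measurable_component_singleton) auto
    then show ?thesis unfolding X_def by (rule measurable_compose) (rule Ym)
  qed
  have compind: "M.indep_vars (\<lambda>_. N) (\<lambda>r \<theta>. \<theta> r) {..<m}"
  proof (subst M.indep_vars_iff_distr_eq_PiM')
    show "{..<m} \<noteq> {}" using assms(3) by (metis lessThan_iff less_le_trans empty_iff zero_less_one)
    show "M.random_variable N (\<lambda>\<theta>. \<theta> r)" if "r \<in> {..<m}" for r
      unfolding MN using that by (intro measurable_component_singleton) auto
    have "distr M (PiM {..<m} (\<lambda>r. N)) (\<lambda>\<theta>. \<lambda>r\<in>{..<m}. \<theta> r) = distr M M (\<lambda>\<theta>. \<theta>)"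
      by (rule distr_cong) (auto simp: MN space_PiM PiE_restrict)
    also have "\<dots> = M" by simp
    also have "M = PiM {..<m} (\<lambda>r. distr M N (\<lambda>\<theta>. \<theta> r))"
      unfolding MN by (rule PiM_cong) (auto intro!: distr_PiM_component[symmetric] N_prob)
    finally show "distr M (PiM {..<m} (\<lambda>r. N)) (\<lambda>\<theta>. \<lambda>r\<in>{..<m}. \<theta> r) = PiM {..<m} (\<lambda>r. distr M N (\<lambda>\<theta>. \<theta> r))" .
  qed
  have indX: "M.indep_vars (\<lambda>_. borel) X {..<m}"
    unfolding X_def by (rule M.indep_vars_compose2[OF compind]) (rule Ym)
  have ipadd: "ip i (\<lambda>j. u j + c j) xh = ip i u xh + ip i c xh" for u c
    unfolding ip_def by (simp add: distrib_right sum.distrib)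
  define S where "S = {z\<in>space N. \<bar>snd z + ip i (fst z) xh\<bar> \<le> 2 * \<Delta>}"
  have S_sets: "S \<in> sets N" unfolding S_def
  proof -
    note [measurable] = ipm0 sndm
    show "{z\<in>space N. \<bar>snd z + ip i (fst z) xh\<bar> \<le> 2 * \<Delta>} \<in> sets N" by measurable
  qed
  have PS: "{z\<in>space N. P r z} \<subseteq> S" if "r < m" for r
  proof
    fix z assume z: "z \<in> {z\<in>space N. P r z}"
    have w1: "\<bar>ip i (w r) xh\<bar> \<le> \<Delta>" unfolding xh_def
      using assms(6,8) that by (intro ip_bound) auto
    have b1: "\<bar>b r\<bar> \<le> \<Delta>" using assms(7) that by auto
    have "P r z" using z by auto
    then have "(ip i (fst z) xh + snd z + (ip i (w r) xh + b r) \<ge> 0) \<noteq> (ip i (fst z) xh + snd z \<ge> 0)"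
      unfolding P_def by (simp add: ipadd add_ac)
    then have "\<bar>snd z + ip i (fst z) xh\<bar> \<le> 2 * \<Delta>" using w1 b1 by linarith
    then show "z \<in> S" using z unfolding S_def by auto
  qed
  have Sbound: "measure N S \<le> p0"
  proof -
    have "emeasure N S = (\<integral>\<^sup>+u. emeasure G (Pair u -` S) \<partial>N1)"
      unfolding N_def using S_sets unfolding N_def by (rule G.emeasure_pair_measure_alt)
    also have "\<dots> \<le> (\<integral>\<^sup>+u. ennreal p0 \<partial>N1)"
    proof (rule nn_integral_mono)
      fix u assume u: "u \<in> space N1"
      have "Pair u -` S = {v. \<bar>v + ip i u xh\<bar> \<le> 2 * \<Delta>}"
        using u unfolding S_def N_def by (auto simp: space_pair_measure spaceG)
      also have "emeasure G \<dots> \<le> ennreal (2 * (2 * \<Delta>) * sqrt (real m) / sqrt (2 * pi))"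
        unfolding G_def using assms(3,4) by (intro gauss_interval) auto
      also have "2 * (2 * \<Delta>) * sqrt (real m) / sqrt (2 * pi) = p0" unfolding p0_def by simp
      finally show "emeasure G (Pair u -` S) \<le> ennreal p0" .
    qed
    also have "\<dots> = ennreal p0" using N1.emeasure_space_1 by simp
    finally have "ennreal (measure N S) \<le> ennreal p0" using S_sets by (simp add: N.emeasure_eq_measure)
    moreover have "0 \<le> p0" using assms(4) by (simp add: p0_def)
    ultimately show ?thesis by (simp add: ennreal_le_iff)
  qed
  have EX: "M.expectation (X r) \<le> p0" if "r < m" for r
  proof -
    have rm: "(\<lambda>\<theta>. \<theta> r) \<in> measurable M N" unfolding MN using that
      by (intro measurable_component_singleton) auto
    have "M.expectation (X r) = integral\<^sup>L (distr M N (\<lambda>\<theta>. \<theta> r)) (Y r)"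
      unfolding X_def by (rule integral_distr[OF rm Ym, symmetric])
    also have "distr M N (\<lambda>\<theta>. \<theta> r) = N"
      unfolding MN using that by (intro distr_PiM_component N_prob) auto
    also have "integral\<^sup>L N (Y r) = integral\<^sup>L N (indicator {z\<in>space N. P r z})"
      by (intro Bochner_Integration.integral_cong) (auto simp: Y_def indicator_def)
    also have "\<dots> = measure N {z\<in>space N. P r z}"
    proof -
      have "{z\<in>space N. P r z} \<inter> space N = {z\<in>space N. P r z}" by auto
      then show ?thesis by simp
    qed
    also have "\<dots> \<le> measure N S" using PS[OF that] S_sets by (intro N.finite_measure_mono) auto
    finally show ?thesis using Sbound by linarith
  qed
  define \<mu> where "\<mu> = (\<Sum>r<m. M.expectation (X r))"
  have X01: "X r \<theta> \<in> {0..1}" for r \<theta> unfolding X_def Y_def by auto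
  have H: "Hoeffding_ineq M {..<m} X (\<lambda>_. 0) (\<lambda>_. 1)"
    unfolding Hoeffding_ineq_def indep_interval_bounded_random_variables_def
      indep_interval_bounded_random_variables_axioms_def
    using M_prob indX X01 by (intro conjI allI impI finite_lessThan AE_I2) auto
  have p0p: "p0 \<le> p"
    unfolding p0_def p_def using assms(4)
    by (intro divide_left_mono mult_nonneg_nonneg) (auto intro: real_sqrt_le_mono)
  have mu_le: "\<mu> \<le> real m * p"
  proof -
    have "\<mu> \<le> (\<Sum>r<m. p)" unfolding \<mu>_def using EX p0p by (intro sum_mono) force
    then show ?thesis by simp
  qed
  have p_nn: "0 \<le> p" unfolding p_def using assms(4) by simp
  define \<epsilon> where "\<epsilon> = c4 * p * real m - \<mu>"
  have eps_ge: "(c4 - 1) * p * real m \<le> \<epsilon>" unfolding \<epsilon>_def using mu_le by (simp add: algebra_simps)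
  have eps_nn0: "0 \<le> (c4 - 1) * p * real m" using assms(5) p_nn by simp
  have m_pos: "0 < real m" using assms(3) by simp
  have sum1: "(\<Sum>r<m. ((1::real) - 0)\<^sup>2) = real m" by simp
  have Hb: "M.prob {\<theta>\<in>space M. (\<Sum>r<m. X r \<theta>) \<ge> \<mu> + \<epsilon>} \<le> exp (-2 * \<epsilon>\<^sup>2 / real m)"
    using Hoeffding_ineq.Hoeffding_ineq_ge[OF H, of \<epsilon>] eps_ge eps_nn0 m_pos unfolding sum1 \<mu>_def by simp
  have A: "((c4 - 1) * p * real m)\<^sup>2 \<le> \<epsilon>\<^sup>2"
    using eps_ge eps_nn0 by (intro power_mono) auto
  have p2: "p\<^sup>2 = 16 * \<Delta>\<^sup>2 * real m / pi"
    unfolding p_def by (simp add: power_divide power_mult_distrib)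
  have "((c4 - 1) * p * real m)\<^sup>2 = (c4 - 1)\<^sup>2 * p\<^sup>2 * (real m)\<^sup>2"
    by (simp add: power_mult_distrib)
  also have "\<dots> = (c4 - 1)\<^sup>2 * (16 * \<Delta>\<^sup>2 * real m / pi) * (real m)\<^sup>2" by (simp add: p2)
  finally have e1: "32 * (c4 - 1)\<^sup>2 * (real m)\<^sup>2 * \<Delta>\<^sup>2 / pi = 2 * ((c4 - 1) * p * real m)\<^sup>2 / real m"
    using m_pos by (simp add: field_simps power2_eq_square)
  have "2 * ((c4 - 1) * p * real m)\<^sup>2 / real m \<le> 2 * \<epsilon>\<^sup>2 / real m"
    using A m_pos by (intro divide_right_mono) auto
  then have "32 * (c4 - 1)\<^sup>2 * (real m)\<^sup>2 * \<Delta>\<^sup>2 / pi \<le> 2 * \<epsilon>\<^sup>2 / real m"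
    unfolding e1 .
  then have expb: "exp (-2 * \<epsilon>\<^sup>2 / real m) \<le> exp (- (32 * (c4 - 1)\<^sup>2 * (real m)\<^sup>2 * \<Delta>\<^sup>2 / pi))"
    by simp
  have cardeq: "real (card (flip_set m i w b x \<theta>)) = (\<Sum>r<m. X r \<theta>)" for \<theta>
  proof -
    have "flip_set m i w b x \<theta> = {r\<in>{..<m}. P r (\<theta> r)}"
      unfolding flip_set_def P_def xh_def by simp
    then have "real (card (flip_set m i w b x \<theta>)) = (\<Sum>r\<in>{r\<in>{..<m}. P r (\<theta> r)}. 1)" by simp
    also have "\<dots> = (\<Sum>r<m. X r \<theta>)"
      by (subst sum.inter_filter) (auto simp: X_def Y_def)
    finally show ?thesis .
  qed
  define T where "T = {\<theta>\<in>space M. (\<Sum>r<m. X r \<theta>) \<le> c4 * p * real m}"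
  define U where "U = {\<theta>\<in>space M. (\<Sum>r<m. X r \<theta>) \<ge> \<mu> + \<epsilon>}"
  have TU: "T \<in> sets M" "U \<in> sets M" unfolding T_def U_def using Xm by measurable
  have "space M \<subseteq> T \<union> U" unfolding T_def U_def \<epsilon>_def by auto
  then have "1 \<le> measure M (T \<union> U)"
    using TU M.prob_space by (metis M.finite_measure_mono sets.Un)
  also have "\<dots> \<le> measure M T + measure M U" using TU by (rule measure_Un_le)
  finally have "1 - exp (- (32 * (c4 - 1)\<^sup>2 * (real m)\<^sup>2 * \<Delta>\<^sup>2 / pi)) \<le> measure M T"
    using Hb expb unfolding U_def by linarith
  moreover have "T = {\<theta> \<in> space (init_measure m i).
              real (card (flip_set m i w b x \<theta>))
                \<le> c4 * (4 * \<Delta> * sqrt (real m) / sqrt pi) * real m}"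
    unfolding T_def M_def p_def cardeq ..
  ultimately show ?thesis unfolding M_def by simp
qed

end
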